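(* Fix $\Delta>0$ and let $q=1-e^{-\lambda\Delta}$. In the $\mathrm{EDD}(\lambda)$ model with a global clock, the probability that a run of the protocol $\mathrm{CORE}(\Delta)$ is correct equals $\sum_{k=0}^{n}\frac{1}{k!}\,q^{\,n-k}(1-q)^k$.
   Context: Agents $i_0,i_1,\ldots,i_n$ share an accurate global clock and are connected by a complete reliable network; the delay of each message is an independent exponential random variable with parameter $\lambda$. At time $0$ the supervisor $i_0$ receives an external input. Protocol $\mathrm{CORE}(\Delta)$: at time $0$, $i_0$ sends a "trigger" message to each of $i_1,\ldots,i_n$ (with independent delays $e_1,\ldots,e_n$); upon receiving the trigger, agent $i_k$ waits until the global time is at least $\Delta$ and then performs its action $\alpha_k$ (so if the trigger arrives after time $\Delta$ it acts immediately on arrival). Letting $t_k$ be the time at which $i_k$ performs $\alpha_k$, a run is correct if $t_1\le t_2\le\cdots\le t_n<\infty$. *)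

theory Defs
  imports "HOL-Probability.Probability"
begin

text \<open>Action time of agent k under CORE(Delta): it waits for the trigger (arriving at
  time e k) and until global time Delta, hence acts at max Delta (e k).\<close>
definition core_time :: "real \<Rightarrow> (nat \<Rightarrow> real) \<Rightarrow> nat \<Rightarrow> real" where
  "core_time \<Delta> e k = max \<Delta> (e k)"

definition core_correct :: "real \<Rightarrow> nat \<Rightarrow> (nat \<Rightarrow> real) \<Rightarrow> bool" where
  "core_correct \<Delta> n e \<longleftrightarrow> (\<forall>i j. 1 \<le> i \<and> i \<le> j \<and> j \<le> n \<longrightarrow> core_time \<Delta> e i \<le> core_time \<Delta> e j)"

end

theory Submission
  imports Defs
begin

lemma E1:
  assumes L: "0 < L" and a: "0 \<le> a"
  shows "(\<integral>\<^sup>+x. ennreal (exponential_density L x) * indicator {a<..} x \<partial>lborel) = ennreal (exp (- L * a))"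
proof -
  have tot: "(\<integral>\<^sup>+x. ennreal (exponential_density L x) \<partial>lborel) = 1"
    using nn_integral_erlang_ith_moment[OF L, where k=0 and i=0] by simp
  have le: "(\<integral>\<^sup>+x. ennreal (exponential_density L x) * indicator {..a} x \<partial>lborel) = ennreal (1 - exp (- L * a))"
    using nn_integral_erlang_density[OF L, where k=0 and a=a] a by (simp add: erlang_CDF_0)
  have "(\<integral>\<^sup>+x. ennreal (exponential_density L x) \<partial>lborel) =
     (\<integral>\<^sup>+x. ennreal (exponential_density L x) * indicator {..a} x + ennreal (exponential_density L x) * indicator {a<..} x \<partial>lborel)"
    by (intro nn_integral_cong) (auto split: split_indicator)
  also have "\<dots> = ennreal (1 - exp (- L * a)) + (\<integral>\<^sup>+x. ennreal (exponential_density L x) * indicator {a<..} x \<partial>lborel)"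
    by (subst nn_integral_add) (auto simp: le)
  finally have eq: "ennreal (1 - exp (- L * a)) + (\<integral>\<^sup>+x. ennreal (exponential_density L x) * indicator {a<..} x \<partial>lborel) = ennreal (1 - exp (- L * a)) + ennreal (exp (- L * a))"
    using tot L a by (simp add: ennreal_plus[symmetric] del: ennreal_plus)
  show ?thesis
    using eq ennreal_add_left_cancel[of "ennreal (1 - exp (- L * a))"] by simp
qed

lemma E2:
  assumes L: "0 < L" and a: "0 \<le> a"
  shows "(\<integral>\<^sup>+x. ennreal (exponential_density L x) * indicator {a..} x \<partial>lborel) = ennreal (exp (- L * a))"
proof -
  have "(\<integral>\<^sup>+x. ennreal (exponential_density L x) * indicator {a..} x \<partial>lborel) =
        (\<integral>\<^sup>+x. ennreal (exponential_density L x) * indicator {a<..} x \<partial>lborel)"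
    by (intro nn_integral_cong_AE) (use AE_lborel_singleton[of a] in \<open>auto split: split_indicator\<close>)
  then show ?thesis using E1[OF assms] by simp
qed

locale coreloc =
  fixes l \<Delta> :: real and n :: nat
  assumes lpos: "0 < l" and dpos: "0 < \<Delta>"
begin

definition "N = density lborel (\<lambda>x. ennreal (exponential_density l x))"
definition "p = exp (- l * \<Delta>)"
definition "cv k = (\<Sum>j=0..k. (1 / fact j) * (1 - p) ^ (k - j) * p ^ j)"
definition "V k t = (if t \<le> \<Delta> then cv k else exp (- l * real k * t) / fact k)"
definition "R a t x \<longleftrightarrow> (\<forall>i\<in>{a..n}. t \<le> max \<Delta> (x i)) \<and>
   (\<forall>i\<in>{a..n}. \<forall>j\<in>{a..n}. i \<le> j \<longrightarrow> max \<Delta> (x i) \<le> max \<Delta> (x j))"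

lemma sets_N[measurable_cong]: "sets N = sets borel"
  by (simp add: N_def)

lemma space_N: "space N = UNIV"
  by (simp add: N_def)

lemma prob_N: "prob_space N"
  unfolding N_def using prob_space_exponential_density[OF lpos] by simp

lemma psf: "product_sigma_finite (\<lambda>_. N)"
  unfolding product_sigma_finite_def
  using prob_N by (simp add: prob_space_imp_sigma_finite)

lemma p_bounds: "0 \<le> p" "p \<le> 1"
  using lpos dpos by (auto simp: p_def)

lemma cv_nonneg: "0 \<le> cv k"
  unfolding cv_def using p_bounds by (intro sum_nonneg) auto

lemma cv_Suc: "cv (Suc k) = (1 - p) * cv k + p ^ Suc k / fact (Suc k)"
proof -
  have "cv (Suc k) = (\<Sum>j=0..k. (1 / fact j) * (1 - p) ^ (Suc k - j) * p ^ j) + p ^ Suc k / fact (Suc k)"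
    unfolding cv_def by (simp add: sum.atLeast0_atMost_Suc)
  also have "(\<Sum>j=0..k. (1 / fact j) * (1 - p) ^ (Suc k - j) * p ^ j) = (1 - p) * cv k"
    unfolding cv_def sum_distrib_left
    by (intro sum.cong) (auto simp: Suc_diff_le)
  finally show ?thesis by simp
qed

lemma cv0: "cv 0 = 1"
  by (simp add: cv_def)

lemma V_nonneg: "0 \<le> V k t"
  by (simp add: V_def cv_nonneg)

lemma R_meas:
  assumes I: "{a..n} \<subseteq> I"
  shows "Measurable.pred (PiM I (\<lambda>_. N)) (R a t)"
proof -
  have c: "(\<lambda>x. max \<Delta> (x i)) \<in> borel_measurable (PiM I (\<lambda>_. N))" if "i \<in> {a..n}" for i
  proof -
    have "(\<lambda>x. x i) \<in> PiM I (\<lambda>_. N) \<rightarrow>\<^sub>M N" using I that by (intro measurable_component_singleton) auto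
    then have "(\<lambda>x. x i) \<in> borel_measurable (PiM I (\<lambda>_. N))"
      by (simp add: measurable_cong_sets[OF refl sets_N])
    then show ?thesis by (intro borel_measurable_max) auto
  qed
  have p1: "Measurable.pred (PiM I (\<lambda>_. N)) (\<lambda>x. t \<le> max \<Delta> (x i))" if "i \<in> {a..n}" for i
    unfolding pred_def by (rule borel_measurable_le[OF borel_measurable_const c[OF that]])
  have p2: "Measurable.pred (PiM I (\<lambda>_. N)) (\<lambda>x. i \<le> j \<longrightarrow> max \<Delta> (x i) \<le> max \<Delta> (x j))"
    if "i \<in> {a..n}" "j \<in> {a..n}" for i j
    unfolding pred_def
    using borel_measurable_le[OF c[OF that(1)] c[OF that(2)]]
    by (cases "i \<le> j") (auto intro: sets.sets_Collect_const)
  show ?thesis unfolding R_def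
    by (intro pred_intros_logic pred_intros_finite(3) finite_atLeastAtMost p1 p2)
qed

lemma R_ind_meas:
  assumes I: "{a..n} \<subseteq> I"
  shows "(indicator {x. R a t x} :: _ \<Rightarrow> ennreal) \<in> borel_measurable (PiM I (\<lambda>_. N))"
proof -
  have "{x \<in> space (PiM I (\<lambda>_. N)). R a t x} \<in> sets (PiM I (\<lambda>_. N))"
    using R_meas[OF I] unfolding pred_def .
  moreover have "{x. R a t x} \<inter> space (PiM I (\<lambda>_. N)) = {x \<in> space (PiM I (\<lambda>_. N)). R a t x}" by auto
  ultimately show ?thesis by (simp add: borel_measurable_indicator_iff)
qed

lemma intI:
  assumes t: "0 \<le> t" and S: "S = {t..} \<or> S = {t<..}"
  shows "(\<integral>\<^sup>+y. indicator S y * ennreal (exp (- l * real k * y) / fact k) \<partial>N)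
     = ennreal (exp (- l * real (Suc k) * t) / fact (Suc k))"
proof -
  let ?L = "l * real (Suc k)"
  have L: "0 < ?L" using lpos by simp
  have "(\<integral>\<^sup>+y. indicator S y * ennreal (exp (- l * real k * y) / fact k) \<partial>N)
     = (\<integral>\<^sup>+y. ennreal (exponential_density l y) * (indicator S y * ennreal (exp (- l * real k * y) / fact k)) \<partial>lborel)"
    unfolding N_def using S by (subst nn_integral_density) auto
  also have "\<dots> = (\<integral>\<^sup>+y. ennreal (1 / fact (Suc k)) * (ennreal (exponential_density ?L y) * indicator S y) \<partial>lborel)"
  proof (intro nn_integral_cong)
    fix y :: real
    show "ennreal (exponential_density l y) * (indicator S y * ennreal (exp (- l * real k * y) / fact k)) =
          ennreal (1 / fact (Suc k)) * (ennreal (exponential_density ?L y) * indicator S y)"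
    proof (cases "y \<in> S")
      case True
      then have y: "0 \<le> y" using S t by auto
      have "exponential_density l y * (exp (- l * real k * y) / fact k) = 1 / fact (Suc k) * exponential_density ?L y"
      proof -
        have fp: "(0::real) < fact k + fact k * real k" by (simp add: add_pos_nonneg)
        show ?thesis using y lpos fp
          by (simp add: exponential_density_def exp_add[symmetric] field_simps)
      qed
      then show ?thesis using True y lpos
        by (simp add: ennreal_mult'[symmetric] ennreal_mult[symmetric] exponential_density_nonneg)
    qed simp
  qed
  also have "\<dots> = ennreal (1 / fact (Suc k)) * ennreal (exp (- ?L * t))"
    using S E1[OF L t] E2[OF L t] by (subst nn_integral_cmult) auto
  also have "\<dots> = ennreal (exp (- l * real (Suc k) * t) / fact (Suc k))"
    by (simp add: ennreal_mult'[symmetric])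
  finally show ?thesis .
qed

lemma R_upd:
  assumes a: "a \<le> n"
  shows "R a t (x(a:=y)) \<longleftrightarrow> t \<le> max \<Delta> y \<and> R (Suc a) (max \<Delta> y) x"
proof
  assume H: "R a t (x(a:=y))"
  have h1: "\<forall>i\<in>{a..n}. t \<le> max \<Delta> ((x(a:=y)) i)"
    and h2: "\<forall>i\<in>{a..n}. \<forall>j\<in>{a..n}. i \<le> j \<longrightarrow> max \<Delta> ((x(a:=y)) i) \<le> max \<Delta> ((x(a:=y)) j)"
    using H unfolding R_def by blast+
  have "t \<le> max \<Delta> y" using h1 a by (metis atLeastAtMost_iff fun_upd_same order_refl)
  moreover have "\<forall>i\<in>{Suc a..n}. max \<Delta> y \<le> max \<Delta> (x i)"
  proof
    fix i assume i: "i \<in> {Suc a..n}"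
    then show "max \<Delta> y \<le> max \<Delta> (x i)"
      using h2[rule_format, of a i] a by auto
  qed
  moreover have "\<forall>i\<in>{Suc a..n}. \<forall>j\<in>{Suc a..n}. i \<le> j \<longrightarrow> max \<Delta> (x i) \<le> max \<Delta> (x j)"
  proof (intro ballI impI)
    fix i j assume "i \<in> {Suc a..n}" "j \<in> {Suc a..n}" "i \<le> j"
    then show "max \<Delta> (x i) \<le> max \<Delta> (x j)"
      using h2[rule_format, of i j] by auto
  qed
  ultimately show "t \<le> max \<Delta> y \<and> R (Suc a) (max \<Delta> y) x"
    unfolding R_def by blast
next
  assume H: "t \<le> max \<Delta> y \<and> R (Suc a) (max \<Delta> y) x"
  then have h0: "t \<le> max \<Delta> y" and h1: "\<forall>i\<in>{Suc a..n}. max \<Delta> y \<le> max \<Delta> (x i)"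
    and h2: "\<forall>i\<in>{Suc a..n}. \<forall>j\<in>{Suc a..n}. i \<le> j \<longrightarrow> max \<Delta> (x i) \<le> max \<Delta> (x j)"
    unfolding R_def by blast+
  have "\<forall>i\<in>{a..n}. t \<le> max \<Delta> ((x(a:=y)) i)"
  proof
    fix i assume i: "i \<in> {a..n}"
    show "t \<le> max \<Delta> ((x(a:=y)) i)"
    proof (cases "i = a")
      case False
      then have "i \<in> {Suc a..n}" using i by auto
      then show ?thesis using h0 h1 False by force
    qed (use h0 in simp)
  qed
  moreover have "\<forall>i\<in>{a..n}. \<forall>j\<in>{a..n}. i \<le> j \<longrightarrow> max \<Delta> ((x(a:=y)) i) \<le> max \<Delta> ((x(a:=y)) j)"
  proof (intro ballI impI)
    fix i j assume i: "i \<in> {a..n}" and j: "j \<in> {a..n}" and ij: "i \<le> j"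
    show "max \<Delta> ((x(a:=y)) i) \<le> max \<Delta> ((x(a:=y)) j)"
    proof (cases "i = a")
      case True
      then show ?thesis
      proof (cases "j = a")
        case False
        then have "j \<in> {Suc a..n}" using j by auto
        then show ?thesis using h1 True False by force
      qed simp
    next
      case False
      then have "i \<in> {Suc a..n}" "j \<in> {Suc a..n}" "j \<noteq> a" using i j ij by auto
      then show ?thesis using h2 ij False by force
    qed
  qed
  ultimately show "R a t (x(a:=y))" unfolding R_def by blast
qed

lemma main:
  assumes "a \<le> Suc n"
  shows "\<forall>t. (\<integral>\<^sup>+x. indicator {x. R a t x} x \<partial>PiM {a..n} (\<lambda>_. N)) = ennreal (V (Suc n - a) t)"
  using assms
proof (induction a rule: inc_induct)
  case base
  show ?case
  proof
    fix t
    have "{Suc n..n} = {}" by simp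
    moreover have "R (Suc n) t x" for x by (simp add: R_def)
    ultimately show "(\<integral>\<^sup>+x. indicator {x. R (Suc n) t x} x \<partial>PiM {Suc n..n} (\<lambda>_. N)) = ennreal (V (Suc n - Suc n) t)"
      by (simp only: \<open>{Suc n..n} = {}\<close>, subst product_sigma_finite.nn_integral_empty[OF psf])
         (auto simp: V_def cv0 R_def)
  qed
next
  case (step a)
  then have a: "a \<le> n" by simp
  define k where "k = n - a"
  have k1: "Suc n - Suc a = k" and k2: "Suc n - a = Suc k" using a by (auto simp: k_def)
  have ins: "{a..n} = insert a {Suc a..n}" using a by auto
  show ?case
  proof
    fix t
    have "(\<integral>\<^sup>+x. indicator {x. R a t x} x \<partial>PiM {a..n} (\<lambda>_. N))
       = (\<integral>\<^sup>+y. (\<integral>\<^sup>+x. indicator {x. R a t x} (x(a:=y)) \<partial>PiM {Suc a..n} (\<lambda>_. N)) \<partial>N)"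
      unfolding ins
      by (rule product_sigma_finite.product_nn_integral_insert_rev[OF psf _ _ R_ind_meas]) auto
    also have "\<dots> = (\<integral>\<^sup>+y. (if t \<le> max \<Delta> y then ennreal (V k (max \<Delta> y)) else 0) \<partial>N)"
    proof (intro nn_integral_cong)
      fix y
      show "(\<integral>\<^sup>+x. indicator {x. R a t x} (x(a:=y)) \<partial>PiM {Suc a..n} (\<lambda>_. N)) =
            (if t \<le> max \<Delta> y then ennreal (V k (max \<Delta> y)) else 0)"
      proof (cases "t \<le> max \<Delta> y")
        case True
        then have "(\<integral>\<^sup>+x. indicator {x. R a t x} (x(a:=y)) \<partial>PiM {Suc a..n} (\<lambda>_. N)) =
            (\<integral>\<^sup>+x. indicator {x. R (Suc a) (max \<Delta> y) x} x \<partial>PiM {Suc a..n} (\<lambda>_. N))"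
          by (intro nn_integral_cong) (simp add: R_upd[OF a] split: split_indicator)
        then show ?thesis using True step.IH k1 by simp
      next
        case False
        then show ?thesis by (simp add: R_upd[OF a])
      qed
    qed
    also have "\<dots> = ennreal (V (Suc k) t)"
    proof (cases "t \<le> \<Delta>")
      case True
      have "(\<integral>\<^sup>+y. (if t \<le> max \<Delta> y then ennreal (V k (max \<Delta> y)) else 0) \<partial>N)
          = (\<integral>\<^sup>+y. ennreal (cv k) * indicator {..\<Delta>} y + indicator {\<Delta><..} y * ennreal (exp (- l * real k * y) / fact k) \<partial>N)"
        using True by (intro nn_integral_cong) (auto simp: V_def split: split_indicator)
      also have "\<dots> = ennreal (cv k) * emeasure N {..\<Delta>} + ennreal (exp (- l * real (Suc k) * \<Delta>) / fact (Suc k))"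
        using intI[of \<Delta> "{\<Delta><..}" k] dpos
        by (subst nn_integral_add) (auto simp: nn_integral_cmult_indicator sets_N)
      also have "emeasure N {..\<Delta>} = ennreal (1 - p)"
        unfolding N_def p_def using dpos
        using nn_integral_erlang_density[OF lpos, where k=0 and a=\<Delta>]
        by (subst emeasure_density) (auto simp: erlang_CDF_0 mult.commute)
      also have "exp (- l * real (Suc k) * \<Delta>) = p ^ Suc k"
        unfolding p_def by (subst exp_of_nat_mult[symmetric]) (simp add: algebra_simps)
      finally show ?thesis
        using True cv_nonneg p_bounds
        by (simp add: V_def cv_Suc ennreal_mult'[symmetric] ennreal_plus[symmetric] del: ennreal_plus)
    next
      case False
      have "(\<integral>\<^sup>+y. (if t \<le> max \<Delta> y then ennreal (V k (max \<Delta> y)) else 0) \<partial>N)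
          = (\<integral>\<^sup>+y. indicator {t..} y * ennreal (exp (- l * real k * y) / fact k) \<partial>N)"
        using False by (intro nn_integral_cong) (auto simp: V_def split: split_indicator)
      also have "\<dots> = ennreal (exp (- l * real (Suc k) * t) / fact (Suc k))"
        using False dpos by (intro intI) auto
      finally show ?thesis using False by (simp add: V_def)
    qed
    finally show "(\<integral>\<^sup>+x. indicator {x. R a t x} x \<partial>PiM {a..n} (\<lambda>_. N)) = ennreal (V (Suc n - a) t)"
      using k2 by simp
  qed
qed

lemma core_correct_R:
  "core_correct \<Delta> n f \<longleftrightarrow> R 1 \<Delta> (restrict f {1..n})"
  unfolding core_correct_def R_def core_time_def by auto

end

theorem theorem2:
  fixes M :: "'a measure" and e :: "nat \<Rightarrow> 'a \<Rightarrow> real"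
    and l \<Delta> :: real and n :: nat
  assumes "prob_space M"
    and "l > 0" and "\<Delta> > 0"
    and "prob_space.indep_vars M (\<lambda>_. borel) e {1..n}"
    and "\<And>k. k \<in> {1..n} \<Longrightarrow> distributed M lborel (e k) (exponential_density l)"
  shows "measure M {\<omega> \<in> space M. core_correct \<Delta> n (\<lambda>k. e k \<omega>)}
         = (\<Sum>k=0..n. (1 / fact k) * (1 - exp (- l * \<Delta>)) ^ (n - k) * (exp (- l * \<Delta>)) ^ k)"
proof -
  interpret P: prob_space M by fact
  interpret C: coreloc l \<Delta> n using assms(2,3) by unfold_locales
  show ?thesis
  proof (cases "n = 0")
    case True
    then have "{\<omega> \<in> space M. core_correct \<Delta> n (\<lambda>k. e k \<omega>)} = space M"
      by (auto simp: core_correct_def)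
    then show ?thesis using True by (simp add: P.prob_space)
  next
    case False
    define I where "I = {1..n}"
    have I0: "I \<noteq> {}" using False by (auto simp: I_def)
    have rv: "e i \<in> borel_measurable M" if "i \<in> I" for i
      using distributed_measurable[OF assms(5)] that by (auto simp: I_def)
    have rvN: "e i \<in> M \<rightarrow>\<^sub>M C.N" if "i \<in> I" for i
      using rv[OF that] by (simp add: measurable_cong_sets[OF refl C.sets_N])
    have D: "distr M (PiM I (\<lambda>_. borel)) (\<lambda>x. \<lambda>i\<in>I. e i x) = PiM I (\<lambda>i. distr M borel (e i))"
      using P.indep_vars_iff_distr_eq_PiM'[OF I0, where M'="\<lambda>_. borel" and X=e] rv assms(4)
      by (simp add: I_def)
    have dN: "distr M borel (e i) = C.N" if "i \<in> I" for i
    proof -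
      have "distr M borel (e i) = distr M lborel (e i)" by (rule distr_cong) auto
      also have "\<dots> = density lborel (\<lambda>x. ennreal (exponential_density l x))"
        using distributed_distr_eq_density[OF assms(5)] that by (simp add: I_def)
      finally show ?thesis by (simp add: C.N_def)
    qed
    have D2: "distr M (PiM I (\<lambda>_. C.N)) (\<lambda>x. \<lambda>i\<in>I. e i x) = PiM I (\<lambda>_. C.N)"
    proof -
      have "distr M (PiM I (\<lambda>_. C.N)) (\<lambda>x. \<lambda>i\<in>I. e i x) = distr M (PiM I (\<lambda>_. borel)) (\<lambda>x. \<lambda>i\<in>I. e i x)"
        by (rule distr_cong) (auto intro!: sets_PiM_cong simp: C.sets_N)
      also have "\<dots> = PiM I (\<lambda>_. C.N)" unfolding D by (intro PiM_cong) (auto simp: dN)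
      finally show ?thesis .
    qed
    define S where "S = {x \<in> space (PiM I (\<lambda>_. C.N)). C.R 1 \<Delta> x}"
    have S: "S \<in> sets (PiM I (\<lambda>_. C.N))"
      unfolding S_def by (rule C.R_meas[unfolded pred_def]) (simp add: I_def)
    have X: "(\<lambda>x. \<lambda>i\<in>I. e i x) \<in> M \<rightarrow>\<^sub>M PiM I (\<lambda>_. C.N)"
      using rvN by (intro measurable_restrict) auto
    have pre: "{\<omega> \<in> space M. core_correct \<Delta> n (\<lambda>k. e k \<omega>)} = (\<lambda>x. \<lambda>i\<in>I. e i x) -` S \<inter> space M"
      unfolding S_def using measurable_space[OF X]
      by (auto simp: C.core_correct_R I_def)
    have "measure M {\<omega> \<in> space M. core_correct \<Delta> n (\<lambda>k. e k \<omega>)} = measure (PiM I (\<lambda>_. C.N)) S"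
      unfolding pre using measure_distr[OF X S] D2 by simp
    also have "\<dots> = enn2real (\<integral>\<^sup>+x. indicator S x \<partial>PiM I (\<lambda>_. C.N))"
      using S by (simp add: measure_def)
    also have "(\<integral>\<^sup>+x. indicator S x \<partial>PiM I (\<lambda>_. C.N)) = (\<integral>\<^sup>+x. indicator {x. C.R 1 \<Delta> x} x \<partial>PiM I (\<lambda>_. C.N))"
      by (intro nn_integral_cong) (auto simp: S_def split: split_indicator)
    also have "\<dots> = ennreal (C.V n \<Delta>)"
      using spec[OF C.main[of 1], of \<Delta>] by (simp add: I_def)
    also have "enn2real (ennreal (C.V n \<Delta>)) = C.cv n"
      using C.cv_nonneg by (simp add: C.V_def)
    finally show ?thesis by (simp add: C.cv_def C.p_def)
  qed
qed

end
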